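(* If $\sum_{i=1}^M b_i\ge1$, then for every $\epsilon>0$, $$\bar\Delta_{\mathrm{opt}}(\epsilon)\ge\bar\Delta_{\mathrm{opt},2}(\epsilon)\ge\sum_{i=1}^M\Big[\frac{w_i}{\min\{b_i,\beta^\star\sqrt{w_i}\}}+w_i\Big],$$ where $\beta^\star\in[0,\max_l b_l/\sqrt{w_l}]$ is the root of $\sum_{i=1}^M\min\{b_i,\beta^\star\sqrt{w_i}\}=1$.
   Context: Fix an integer $M\ge1$, weights $w_1,\dots,w_M>0$, constants $b_1,\dots,b_M>0$, and $\epsilon>0$. For $\mathbf r\in(0,\infty)^M$ write $S(\mathbf r)=\sum_{i=1}^M r_i$ and define $$\bar\Delta(\mathbf r)=\sum_{l=1}^M \frac{w_l e^{-r_l\epsilon}}{r_l}\, e^{\epsilon S(\mathbf r)}\big(1+S(\mathbf r)\big)+\sum_{l=1}^M w_l,\qquad \sigma_l(\mathbf r)=\frac{(1-e^{-r_l\epsilon})S(\mathbf r)+r_le^{-r_l\epsilon}}{S(\mathbf r)+1}.$$ Problem 1: minimize $\bar\Delta(\mathbf r)$ over $\mathbf r\in(0,\infty)^M$ subject to $\sigma_l(\mathbf r)\le b_l$ for all $l$; its optimal (infimum) value is $\bar\Delta_{\mathrm{opt}}(\epsilon)$. Problem 2: minimize $\bar\Delta(\mathbf r)$ over $\mathbf r\in(0,\infty)^M$ subject to $r_l\le b_l\big(S(\mathbf r)+1\big)$ for all $l$; its optimal (infimum) value is $\bar\Delta_{\mathrm{opt},2}(\epsilon)$. *)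

theory Defs
  imports Complex_Main
begin

text \<open>Indices run over {1..M}; vectors are functions nat => real (values outside {1..M} are irrelevant).\<close>

definition Ssum :: "nat \<Rightarrow> (nat \<Rightarrow> real) \<Rightarrow> real" where
  "Ssum M r = (\<Sum>i=1..M. r i)"

definition Delta_bar :: "nat \<Rightarrow> (nat \<Rightarrow> real) \<Rightarrow> real \<Rightarrow> (nat \<Rightarrow> real) \<Rightarrow> real" where
  "Delta_bar M w eps r =
     (\<Sum>l=1..M. w l * exp (- r l * eps) / r l) * exp (eps * Ssum M r) * (1 + Ssum M r)
     + (\<Sum>l=1..M. w l)"

definition sigma :: "nat \<Rightarrow> real \<Rightarrow> (nat \<Rightarrow> real) \<Rightarrow> nat \<Rightarrow> real" where
  "sigma M eps r l =
     ((1 - exp (- r l * eps)) * Ssum M r + r l * exp (- r l * eps)) / (Ssum M r + 1)"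

definition feasible1 :: "nat \<Rightarrow> (nat \<Rightarrow> real) \<Rightarrow> real \<Rightarrow> (nat \<Rightarrow> real) set" where
  "feasible1 M b eps = {r. (\<forall>l\<in>{1..M}. 0 < r l) \<and> (\<forall>l\<in>{1..M}. sigma M eps r l \<le> b l)}"

definition feasible2 :: "nat \<Rightarrow> (nat \<Rightarrow> real) \<Rightarrow> (nat \<Rightarrow> real) set" where
  "feasible2 M b = {r. (\<forall>l\<in>{1..M}. 0 < r l) \<and> (\<forall>l\<in>{1..M}. r l \<le> b l * (Ssum M r + 1))}"

definition Delta_opt :: "nat \<Rightarrow> (nat \<Rightarrow> real) \<Rightarrow> (nat \<Rightarrow> real) \<Rightarrow> real \<Rightarrow> real" where
  "Delta_opt M w b eps = Inf (Delta_bar M w eps ` feasible1 M b eps)"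

definition Delta_opt2 :: "nat \<Rightarrow> (nat \<Rightarrow> real) \<Rightarrow> (nat \<Rightarrow> real) \<Rightarrow> real \<Rightarrow> real" where
  "Delta_opt2 M w b eps = Inf (Delta_bar M w eps ` feasible2 M b)"

end

theory Submission
  imports Defs
begin

lemma term_bound:
  fixes x m b w beta :: real
  assumes x: "0 < x" and w: "0 < w" and bt: "0 < beta" and xb: "x \<le> b"
    and m: "m = min b (beta * sqrt w)" and mp: "0 < m"
  shows "w / m - (x - m) / beta^2 \<le> w / x"
proof (cases "beta * sqrt w \<le> b")
  case True
  hence mm: "m = beta * sqrt w" using m by simp
  have ww: "w = m^2 / beta^2" using mm bt w by (simp add: power_mult_distrib)
  have "w / x + (x - m) / beta^2 - w / m = (m - x)^2 / (x * beta^2)"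
    unfolding ww using x bt mp by (simp add: field_simps power2_eq_square)
  moreover have "(m - x)^2 / (x * beta^2) \<ge> 0" using x by simp
  ultimately show ?thesis by linarith
next
  case False
  hence mm: "m = b" using m by simp
  have "m \<le> beta * sqrt w" using False mm by simp
  hence "m^2 \<le> (beta * sqrt w)^2" using mp by (intro power_mono) auto
  hence wge: "m^2 / beta^2 \<le> w" using bt w by (simp add: power_mult_distrib field_simps)
  have xm: "x \<le> m" using xb mm by simp
  have "w / x - w / m = w * (m - x) / (x * m)" using x mp by (simp add: field_simps)
  also have "\<dots> \<ge> (m^2 / beta^2) * (m - x) / (x * m)"
    using wge xm x mp by (intro divide_right_mono mult_right_mono) auto
  finally have 1: "w / x - w / m \<ge> (m^2 / beta^2) * (m - x) / (x * m)" .
  have "(m^2 / beta^2) * (m - x) / (x * m) = (m / x) * ((m - x) / beta^2)"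
    using x mp bt by (simp add: field_simps power2_eq_square)
  also have "\<dots> \<ge> 1 * ((m - x) / beta^2)"
    using x xm by (intro mult_right_mono) auto
  finally have 2: "(m^2 / beta^2) * (m - x) / (x * m) \<ge> (m - x) / beta^2" by simp
  have 3: "(m - x) / beta^2 = - ((x - m) / beta^2)" by (metis minus_diff_eq minus_divide_left)
  show ?thesis using 1 2 3 by linarith
qed

lemma S_ge:
  assumes "\<forall>l\<in>{1..M}. 0 < r l" "l \<in> {1..M}"
  shows "r l \<le> Ssum M r"
  unfolding Ssum_def using assms by (intro member_le_sum) (auto intro: less_imp_le)

lemma S_pos:
  assumes "\<forall>l\<in>{1..M}. 0 < (r::nat\<Rightarrow>real) l"
  shows "0 \<le> Ssum M r"
  unfolding Ssum_def using assms by (intro sum_nonneg) (auto intro: less_imp_le)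

lemma feas_sub: assumes eps: "0 < eps" shows "feasible1 M b eps \<subseteq> feasible2 M b"
proof
  fix r assume "r \<in> feasible1 M b eps"
  hence pos: "\<forall>l\<in>{1..M}. 0 < r l" and sg: "\<forall>l\<in>{1..M}. sigma M eps r l \<le> b l"
    unfolding feasible1_def by auto
  have "r l \<le> b l * (Ssum M r + 1)" if l: "l \<in> {1..M}" for l
  proof -
    let ?S = "Ssum M r" and ?e = "exp (- r l * eps)"
    have Sr: "r l \<le> ?S" using S_ge[OF pos l] .
    have e1: "?e \<le> 1" using pos l eps by (auto intro!: mult_nonneg_nonneg less_imp_le)
    have "(1 - ?e) * (?S - r l) \<ge> 0" using e1 Sr by auto
    hence "r l \<le> (1 - ?e) * ?S + r l * ?e" by (simp add: algebra_simps)
    also have "\<dots> = sigma M eps r l * (?S + 1)"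
      unfolding sigma_def using S_pos[OF pos] by (simp add: field_simps)
    also have "\<dots> \<le> b l * (?S + 1)"
      using sg l S_pos[OF pos] by (intro mult_right_mono) auto
    finally show ?thesis .
  qed
  thus "r \<in> feasible2 M b" unfolding feasible2_def using pos by auto
qed

lemma feas1_ne:
  assumes "\<forall>i\<in>{1..M}. 0 < b i" "0 < eps"
  shows "feasible1 M b eps \<noteq> {}"
proof -
  define c where "c = Min (insert 1 (b ` {1..M})) / max eps 1"
  have mn: "0 < Min (insert 1 (b ` {1..M}))"
    using assms(1) by (simp add: Min_gr_iff)
  have K: "0 < max eps 1" by simp
  have cp: "0 < c" unfolding c_def using mn K by simp
  define r where "r = (\<lambda>l::nat. c)"
  have "r \<in> feasible1 M b eps"
    unfolding feasible1_def
  proof (safe)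
    fix l assume l: "l \<in> {1..M}"
    show "0 < r l" using cp r_def by simp
    let ?S = "Ssum M r" and ?e = "exp (- r l * eps)"
    have S0: "0 \<le> ?S" using S_pos[of M r] cp r_def by simp
    have "1 - ?e \<le> c * eps" using exp_ge_add_one_self[of "- c * eps"] r_def by simp
    hence "(1 - ?e) * ?S \<le> c * eps * ?S" using S0 by (intro mult_right_mono) auto
    moreover have "r l * ?e \<le> c" using r_def cp assms(2) by simp
    moreover have "c * eps * ?S \<le> c * max eps 1 * ?S"
      using cp S0 by (intro mult_right_mono mult_left_mono) auto
    moreover have "c \<le> c * max eps 1" using cp by simp
    ultimately have "(1 - ?e) * ?S + r l * ?e \<le> c * max eps 1 * (?S + 1)"
      by (simp add: algebra_simps)
    hence "sigma M eps r l \<le> c * max eps 1"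
      unfolding sigma_def using S0 by (simp add: divide_simps)
    also have "c * max eps 1 = Min (insert 1 (b ` {1..M}))" unfolding c_def by simp
    also have "\<dots> \<le> b l" using l by (intro Min_le) auto
    finally show "sigma M eps r l \<le> b l" .
  qed
  thus ?thesis by auto
qed

lemma Dbar_nonneg:
  assumes "\<forall>i\<in>{1..M}. 0 < w i" "\<forall>l\<in>{1..M}. 0 < r l"
  shows "0 \<le> Delta_bar M w eps r"
  unfolding Delta_bar_def using assms S_pos[OF assms(2)]
  by (intro add_nonneg_nonneg mult_nonneg_nonneg sum_nonneg) (auto intro: less_imp_le)

lemma Dbar_lower:
  assumes M: "M \<ge> 1"
    and w: "\<forall>i\<in>{1..M}. 0 < w i"
    and b: "\<forall>i\<in>{1..M}. 0 < b i"
    and eps: "eps > 0"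
    and bt0: "0 \<le> beta"
    and sm: "(\<Sum>i=1..M. min (b i) (beta * sqrt (w i))) = 1"
    and r: "r \<in> feasible2 M b"
  shows "(\<Sum>i=1..M. w i / min (b i) (beta * sqrt (w i)) + w i) \<le> Delta_bar M w eps r"
proof -
  from r have pos: "\<forall>l\<in>{1..M}. 0 < r l" and rb: "\<forall>l\<in>{1..M}. r l \<le> b l * (Ssum M r + 1)"
    unfolding feasible2_def by auto
  let ?S = "Ssum M r"
  have S0: "0 \<le> ?S" using S_pos[OF pos] .
  define m where "m = (\<lambda>i. min (b i) (beta * sqrt (w i)))"
  define x where "x = (\<lambda>i. r i / (?S + 1))"
  have bt: "0 < beta"
  proof (rule ccontr)
    assume "\<not> 0 < beta" hence "beta = 0" using bt0 by simp
    hence "(\<Sum>i=1..M. min (b i) (beta * sqrt (w i))) = 0"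
      using b by (intro sum.neutral) auto
    thus False using sm by simp
  qed
  have mp: "0 < m i" if "i \<in> {1..M}" for i
    unfolding m_def using that b w bt by auto
  have xp: "0 < x i" if "i \<in> {1..M}" for i
    unfolding x_def using that pos S0 by auto
  have xb: "x i \<le> b i" if "i \<in> {1..M}" for i
    unfolding x_def using that rb S0 by (simp add: divide_simps mult.commute)
  have sx: "(\<Sum>i=1..M. x i) = ?S / (?S + 1)"
    unfolding x_def Ssum_def by (simp add: sum_divide_distrib)
  have sx1: "(\<Sum>i=1..M. x i) \<le> 1" unfolding sx using S0 by simp
  have "(\<Sum>i=1..M. w i / m i) - ((\<Sum>i=1..M. x i) - (\<Sum>i=1..M. m i)) / beta^2
        = (\<Sum>i=1..M. w i / m i - (x i - m i) / beta^2)"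
    by (simp add: sum_subtractf sum_divide_distrib diff_divide_distrib)
  also have "\<dots> \<le> (\<Sum>i=1..M. w i / x i)"
    by (intro sum_mono term_bound) (use xp w bt xb mp m_def in auto)
  finally have k1: "(\<Sum>i=1..M. w i / m i) - ((\<Sum>i=1..M. x i) - (\<Sum>i=1..M. m i)) / beta^2 \<le> (\<Sum>i=1..M. w i / x i)" .
  have sm1: "(\<Sum>i=1..M. m i) = 1" using sm m_def by simp
  have "((\<Sum>i=1..M. x i) - (\<Sum>i=1..M. m i)) / beta^2 \<le> 0"
    using sm1 sx1 bt by (intro divide_nonpos_pos) auto
  hence key: "(\<Sum>i=1..M. w i / m i) \<le> (\<Sum>i=1..M. w i / x i)" using k1 by linarith
  have "(\<Sum>i=1..M. w i / x i) \<le> (\<Sum>l=1..M. w l * exp (- r l * eps) / r l * exp (eps * ?S) * (1 + ?S))"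
  proof (intro sum_mono)
    fix l assume l: "l \<in> {1..M}"
    have "exp (- r l * eps) * exp (eps * ?S) = exp (eps * (?S - r l))"
      by (simp add: exp_add[symmetric] algebra_simps)
    also have "\<dots> \<ge> 1" using S_ge[OF pos l] eps by simp
    finally have e: "exp (- r l * eps) * exp (eps * ?S) \<ge> 1" .
    have "w l / x l = w l * (1 + ?S) / r l" unfolding x_def using pos l S0 by (simp add: field_simps)
    also have "\<dots> \<le> w l * (1 + ?S) / r l * (exp (- r l * eps) * exp (eps * ?S))"
    proof -
      have nn: "0 \<le> w l * (1 + ?S) / r l" using w l pos S0 by (auto intro!: divide_nonneg_pos less_imp_le)
      show ?thesis using mult_left_mono[OF e nn] by simp
    qed
    also have "\<dots> = w l * exp (- r l * eps) / r l * exp (eps * ?S) * (1 + ?S)" by simp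
    finally show "w l / x l \<le> w l * exp (- r l * eps) / r l * exp (eps * ?S) * (1 + ?S)" .
  qed
  also have "\<dots> = (\<Sum>l=1..M. w l * exp (- r l * eps) / r l) * exp (eps * ?S) * (1 + ?S)"
    by (simp add: sum_distrib_right)
  finally have "(\<Sum>i=1..M. w i / m i) + (\<Sum>i=1..M. w i) \<le> Delta_bar M w eps r"
    unfolding Delta_bar_def using key by linarith
  thus ?thesis unfolding m_def by (simp add: sum.distrib)
qed

theorem lemma3:
  fixes M :: nat and w b :: "nat \<Rightarrow> real" and eps beta :: real
  assumes "M \<ge> 1"
    and "\<forall>i\<in>{1..M}. 0 < w i"
    and "\<forall>i\<in>{1..M}. 0 < b i"
    and "eps > 0"
    and "(\<Sum>i=1..M. b i) \<ge> 1"
    and "0 \<le> beta" and "beta \<le> Max ((\<lambda>l. b l / sqrt (w l)) ` {1..M})"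
    and "(\<Sum>i=1..M. min (b i) (beta * sqrt (w i))) = 1"
  shows "Delta_opt M w b eps \<ge> Delta_opt2 M w b eps
       \<and> Delta_opt2 M w b eps \<ge> (\<Sum>i=1..M. w i / min (b i) (beta * sqrt (w i)) + w i)"
proof
  have ne1: "feasible1 M b eps \<noteq> {}" using feas1_ne assms(3,4) by blast
  have sub: "feasible1 M b eps \<subseteq> feasible2 M b" using feas_sub assms(4) by blast
  have ne2: "feasible2 M b \<noteq> {}" using ne1 sub by blast
  have bdd: "bdd_below (Delta_bar M w eps ` feasible2 M b)"
    by (rule bdd_belowI[of _ 0]) (use Dbar_nonneg assms(2) in \<open>auto simp: feasible2_def\<close>)
  show "Delta_opt M w b eps \<ge> Delta_opt2 M w b eps"
    unfolding Delta_opt_def Delta_opt2_def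
    by (rule cInf_superset_mono) (use ne1 bdd sub in auto)
  show "Delta_opt2 M w b eps \<ge> (\<Sum>i=1..M. w i / min (b i) (beta * sqrt (w i)) + w i)"
    unfolding Delta_opt2_def
    by (rule cInf_greatest) (use ne2 Dbar_lower assms in auto)
qed

end
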